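(* Let $k\ge2$ be an integer, let $1<p\le\pi^2(k-1/2)^2-1$, and define \[\psi_k(x)=\sin^p(\pi x)\Big(\frac1{(k-x)^p}+\frac1{(k+x-1)^p}\Big).\] Then $\psi_k$ is decreasing on $[1/2,1]$. *)

theory Defs
  imports "HOL-Analysis.Analysis"
begin

definition psi :: "nat \<Rightarrow> real \<Rightarrow> real \<Rightarrow> real" where
  "psi k p x = (sin (pi * x)) powr p *
      (1 / (real k - x) powr p + 1 / (real k + x - 1) powr p)"

end

theory Submission
  imports Defs
begin

lemma s4: "(\<Sum>m<4. sin_coeff m * y ^ m) = (y::real) - y^3/6"
proof -
  have "{..<4::nat} = {0,1,2,3}" by auto
  then show ?thesis by (simp add: sin_coeff_def fact_numeral)
qed
lemma c4: "(\<Sum>m<4. cos_coeff m * y ^ m) = 1 - (y::real)^2/2"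
proof -
  have "{..<4::nat} = {0,1,2,3}" by auto
  then show ?thesis by (simp add: cos_coeff_def fact_numeral)
qed
lemma sin_low: "(0::real) \<le> y \<Longrightarrow> y - y^3/6 - y^4/24 \<le> sin y"
proof -
  have "\<bar>sin y - (y - y^3/6)\<bar> \<le> y^4/24" using Maclaurin_sin_bound[of y 4] by (simp add: s4 fact_numeral)
  then show ?thesis by linarith
qed
lemma cos_up: "cos (y::real) \<le> 1 - y^2/2 + y^4/24"
proof -
  obtain t where "cos y = (\<Sum>m<4. cos_coeff m * y ^ m) + (cos(t + 1/2 * real 4 * pi) / fact 4) * y ^ 4"
    using Maclaurin_cos_expansion[of y 4] by blast
  then have "cos y = 1 - y^2/2 + cos(t + 1/2 * real 4 * pi) / 24 * y ^ 4" by (simp add: c4 fact_numeral)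
  moreover have "cos(t + 1/2 * real 4 * pi) * y ^ 4 \<le> 1 * y^4"
    by (rule mult_right_mono) auto
  ultimately show ?thesis by linarith
qed
lemma key_trig: assumes "0 \<le> y" "y \<le> pi/2" shows "y^3/16 \<le> sin y - y * cos y"
proof -
  have y2: "y \<le> 2" using assms pi_less_4 by linarith
  have "y^3/16 \<le> y^3/3 - y^4/24 - y^5/24"
  proof -
    have "y^4/24 + y^5/24 = y^3 * (y/24 + y^2/24)" by (simp add: algebra_simps eval_nat_numeral)
    also have "\<dots> \<le> y^3 * (2/24 + 4/24)"
    proof (rule mult_left_mono)
      have "y^2 \<le> 2^2" by (rule power_mono) (use assms y2 in auto)
      then show "y/24 + y^2/24 \<le> 2/24 + 4/24" using y2 by simp
    qed (use assms in simp)
    finally have "y^4/24 + y^5/24 \<le> y^3 * (2/24 + 4/24)" .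
    then have "y^4/24 + y^5/24 \<le> y^3/4" by simp
    moreover have "0 \<le> y^3" using assms(1) by simp
    ultimately show ?thesis by linarith
  qed
  also have "\<dots> \<le> sin y - y * cos y"
  proof -
    have "y * cos y \<le> y * (1 - y^2/2 + y^4/24)" using cos_up[of y] assms(1) by (rule mult_left_mono)
    then show ?thesis using sin_low[OF assms(1)] by (simp add: algebra_simps eval_nat_numeral)
  qed
  finally show ?thesis .
qed

lemma trig2:
  fixes t c p :: real
  assumes "0 \<le> t" "t \<le> 1/2" "3/2 \<le> c" "p + 1 \<le> pi^2 * c^2" "0 \<le> p"
  shows "cos (pi*t) * (p+1) * t \<le> pi * sin (pi*t) * (c^2 - t^2)"
proof -
  define y where "y = pi * t"
  have y0: "0 \<le> y" "y \<le> pi/2" using assms by (auto simp: y_def)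
  have cy: "0 \<le> cos y" using y0 by (intro cos_ge_zero) auto
  have sy: "0 \<le> sin y" using y0 by (intro sin_ge_zero) auto
  have t: "t = y / pi" by (simp add: y_def)
  have "cos y * (p+1) * t \<le> cos y * (pi^2*c^2) * t"
    using cy assms by (intro mult_right_mono mult_left_mono) auto
  also have "\<dots> = pi * (c^2 * (y * cos y))" by (simp add: t power2_eq_square)
  also have "\<dots> \<le> pi * (c^2 * sin y - t^2 * sin y)"
  proof -
    have k: "y^3/16 \<le> sin y - y * cos y" by (rule key_trig[OF y0])
    have "(3/2)^2 \<le> c^2" by (rule power_mono) (use assms(3) in auto)
    moreover have "(3/2::real)^2 = 9/4" by (simp add: power2_eq_square)
    ultimately have c2: "9/4 \<le> c^2" by simp
    have "t^2 * sin y \<le> t^2 * y" using sin_x_le_x[OF y0(1)] by (intro mult_left_mono) auto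
    also have "\<dots> = y^3 / pi^2" by (simp add: t power2_eq_square eval_nat_numeral)
    also have "\<dots> \<le> y^3 / 9"
    proof (rule divide_left_mono)
      have "3^2 \<le> pi^2" by (rule power_mono) (use pi_gt3 in auto)
      then show "9 \<le> pi^2" by simp
    qed (use y0 in auto)
    also have "\<dots> \<le> c^2 * (y^3/16)"
    proof -
      have "0 \<le> y^3/16" using y0 by simp
      with c2 have "9/4 * (y^3/16) \<le> c^2 * (y^3/16)" by (rule mult_right_mono)
      moreover have "y^3/9 \<le> 9/4 * (y^3/16)" using \<open>0 \<le> y^3/16\<close> by simp
      ultimately show ?thesis by linarith
    qed
    also have "\<dots> \<le> c^2 * (sin y - y * cos y)" using k by (intro mult_left_mono) auto
    finally have "t^2 * sin y \<le> c^2 * (sin y - y * cos y)" .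
    then have "c^2 * (y * cos y) \<le> c^2 * sin y - t^2 * sin y" by (simp add: algebra_simps)
    then show ?thesis by (rule mult_left_mono) simp
  qed
  also have "\<dots> = pi * sin y * (c^2 - t^2)" by (simp add: algebra_simps)
  finally show ?thesis by (simp add: y_def)
qed
lemma dphi: "0 < c - s \<Longrightarrow> 0 < c + p * s \<Longrightarrow> 0 < c + s \<Longrightarrow> 0 < c - p * s \<Longrightarrow>
  DERIV (\<lambda>s. p * ln (c - s) + ln (c + p * s) - p * ln (c + s) - ln (c - p * s)) (s::real) :> 
     p*(-1/(c-s)) + p/(c+p * s) - p/(c+s) - (-p)/(c-p * s)"
  by (rule derivative_eq_intros refl | simp)+
lemma pw:
  fixes t c p :: real
  assumes "0 \<le> t" "t < c" "1 \<le> p"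
  shows "(c+t) powr p * (c - p * t) \<le> (c-t) powr p * (c + p * t)"
proof (cases "c - p * t \<le> 0")
  case True
  have "(c+t) powr p * (c - p * t) \<le> 0" using True by (simp add: mult_nonneg_nonpos)
  also have "0 \<le> (c-t) powr p * (c + p * t)" using assms by simp
  finally show ?thesis .
next
  case False
  define phi where "phi s = p * ln (c - s) + ln (c + p * s) - p * ln (c + s) - ln (c - p * s)" for s
  have "phi 0 \<le> phi t"
  proof (rule DERIV_nonneg_imp_nondecreasing[OF assms(1)])
    fix s assume s: "0 \<le> s" "s \<le> t"
    have ps: "p * s \<le> p * t" using s assms by (intro mult_left_mono) auto
    have ps0: "0 \<le> p * s" using s assms by simp
    have pos: "0 < c - s" "0 < c + p * s" "0 < c + s" "0 < c - p * s" using s assms False ps ps0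
      by linarith+
    have D: "DERIV phi s :> p*(-1/(c-s)) + p/(c+p * s) - p/(c+s) - (-p)/(c-p * s)"
      unfolding phi_def[abs_def] by (rule dphi[OF pos])
    have "p*(1/(c-s) + 1/(c+s)) \<le> p*(1/(c+p * s) + 1/(c-p * s))"
    proof (rule mult_left_mono)
      have e1: "1/(c-s) + 1/(c+s) = 2*c/(c^2-s^2)" using pos by (simp add: field_simps power2_eq_square)
      have e2: "1/(c+p * s) + 1/(c-p * s) = 2*c/(c^2-(p * s)^2)" using pos by (simp add: field_simps power2_eq_square)
      have "s^2 \<le> (p * s)^2" using s assms by (intro power_mono) (auto simp: mult_le_cancel_right1)
      moreover have "0 < c^2-(p * s)^2"
      proof -
        have "0 < (c - p * s)*(c + p * s)" using pos by simp
        then show ?thesis by (simp add: power2_eq_square algebra_simps)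
      qed
      ultimately show "1/(c-s) + 1/(c+s) \<le> 1/(c+p * s) + 1/(c-p * s)"
        unfolding e1 e2 using pos by (intro divide_left_mono mult_nonneg_nonneg mult_pos_pos) auto
    qed (use assms in auto)
    then show "\<exists>y. DERIV phi s :> y \<and> 0 \<le> y" using D by (intro exI[of _ _]) (auto simp: field_simps)
  qed
  moreover have "phi 0 = 0" by (simp add: phi_def)
  ultimately have "p*ln(c+t) + ln(c-p * t) \<le> p*ln(c-t) + ln(c+p * t)" by (simp add: phi_def)
  then have "exp (p*ln(c+t) + ln(c-p * t)) \<le> exp (p*ln(c-t) + ln(c+p * t))" by simp
  moreover have "0 < c + p * t" using assms by (smt (verit) mult_nonneg_nonneg)
  ultimately show ?thesis using assms False by (simp add: exp_add powr_def)
qed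
lemma ineqAB:
  fixes t c p :: real
  assumes "0 \<le> t" "t < c" "1 \<le> p"
  shows "c * ((c-t) powr (-p) - (c+t) powr (-p)) \<le> p * t * ((c-t) powr (-p) + (c+t) powr (-p))"
proof -
  define U where "U = (c+t) powr p"
  define V where "V = (c-t) powr p"
  have U: "0 < U" and V: "0 < V" using assms by (auto simp: U_def V_def)
  have h: "U * (c - p * t) \<le> V * (c + p * t)" using pw[OF assms] by (simp add: U_def V_def)
  have "U * (c - p * t) / (U*V) \<le> V * (c + p * t) / (U*V)"
    using h U V by (intro divide_right_mono) auto
  then have "(c - p * t) / V \<le> (c + p * t) / U" using U V by simp
  moreover have "(c - p * t) / V = c/V - p*t/V" "(c + p * t) / U = c/U + p*t/U"
    by (simp_all add: diff_divide_distrib add_divide_distrib)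
  ultimately have "c * (1/V - 1/U) \<le> p * t * (1/V + 1/U)"
    by (simp add: right_diff_distrib distrib_left)
  then show ?thesis by (simp add: powr_minus_divide U_def V_def)
qed

lemma bracket:
  fixes k :: nat and p z :: real
  assumes "k \<ge> 2" and "1 < p" and "p \<le> pi\<^sup>2 * (real k - 1/2)\<^sup>2 - 1"
    and "1/2 \<le> z" "z < 1"
  shows "sin (pi*z) * ((k-z) powr (-p) / (k-z) - (k+z-1) powr (-p) / (k+z-1))
         \<le> pi * (- cos (pi*z)) * ((k-z) powr (-p) + (k+z-1) powr (-p))"
proof -
  define t where "t = z - 1/2"
  define c where "c = real k - 1/2"
  have kk: "2 \<le> real k" using assms(1) by simp
  have t: "0 \<le> t" "t \<le> 1/2" "t < c" using assms kk by (auto simp: t_def c_def)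
  have c: "3/2 \<le> c" using kk by (simp add: c_def)
  have a: "real k - z = c - t" and b: "real k + z - 1 = c + t" by (simp_all add: t_def c_def)
  have S: "sin (pi*z) = cos (pi*t)" 
    by (simp add: t_def right_diff_distrib cos_diff)
  have C: "- cos (pi*z) = sin (pi*t)"
    by (simp add: t_def right_diff_distrib sin_diff)
  define A where "A = (c-t) powr (-p)"
  define B where "B = (c+t) powr (-p)"
  have AB: "0 \<le> A + B" by (simp add: A_def B_def)
  have ct: "0 < c - t" "0 < c + t" "0 < c^2 - t^2" using t c
    by (auto simp: power2_eq_square algebra_simps intro!: mult_strict_mono)
  have cs: "0 \<le> cos (pi*t)"
  proof (rule cos_ge_zero)
    have "0 \<le> pi * t" using t by simp
    then show "- (pi/2) \<le> pi * t" using pi_gt_zero by linarith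
    have "pi * t \<le> pi * (1/2)" using t by (intro mult_left_mono) auto
    then show "pi * t \<le> pi/2" by simp
  qed
  have i1: "c * (A - B) \<le> p * t * (A + B)" unfolding A_def B_def
    by (rule ineqAB) (use t assms in auto)
  have "A/(c-t) - B/(c+t) = (c*(A-B) + t*(A+B)) / (c^2-t^2)"
    using ct by (simp add: field_simps power2_eq_square)
  also have "\<dots> \<le> ((p+1)*t*(A+B)) / (c^2-t^2)"
    using i1 ct by (intro divide_right_mono) (auto simp: algebra_simps)
  finally have i2: "A/(c-t) - B/(c+t) \<le> ((p+1)*t*(A+B)) / (c^2-t^2)" .
  have "cos (pi*t) * (A/(c-t) - B/(c+t)) \<le> cos (pi*t) * (((p+1)*t*(A+B)) / (c^2-t^2))"
    using i2 cs by (rule mult_left_mono)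
  also have "\<dots> = (A+B) * (cos (pi*t) * (p+1) * t) / (c^2-t^2)" by (simp add: algebra_simps)
  also have "\<dots> \<le> (A+B) * (pi * sin (pi*t) * (c^2 - t^2)) / (c^2-t^2)"
  proof (intro divide_right_mono mult_left_mono)
    show "cos (pi * t) * (p + 1) * t \<le> pi * sin (pi * t) * (c\<^sup>2 - t\<^sup>2)"
      by (rule trig2) (use t c assms in \<open>auto simp: c_def\<close>)
  qed (use AB ct in auto)
  also have "\<dots> = pi * sin (pi*t) * (A+B)" using ct by simp
  finally show ?thesis unfolding S C a b A_def B_def .
qed

lemma psi_nonneg:
  assumes "1/2 \<le> x" "x \<le> 1"
  shows "0 \<le> psi k p x"
proof -
  have "0 \<le> sin (pi*x)" using assms by (intro sin_ge_zero) auto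
  then show ?thesis unfolding psi_def by (intro mult_nonneg_nonneg add_nonneg_nonneg) auto
qed

theorem corollary2:
  fixes k :: nat and p :: real
  assumes "k \<ge> 2" and "1 < p" and "p \<le> pi\<^sup>2 * (real k - 1/2)\<^sup>2 - 1"
  shows "antimono_on {1/2..1} (psi k p)"
proof (rule monotone_onI)
  fix x y :: real assume xy: "x \<in> {1/2..1}" "y \<in> {1/2..1}" "x \<le> y"
  show "psi k p y \<le> psi k p x"
  proof (cases "y = 1")
    case True
    have "psi k p y = 0" using True assms by (simp add: psi_def)
    then show ?thesis using psi_nonneg[of x k p] xy by simp
  next
    case False
    then have y1: "y < 1" using xy by simp
    have kk: "2 \<le> real k" using assms(1) by simp
    define f where "f z = sin (pi*z) powr p * ((real k - z) powr (-p) + (real k + z - 1) powr (-p))" for z :: real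
    have fe: "psi k p z = f z" for z by (simp add: psi_def f_def powr_minus_divide)
    have "f y \<le> f x"
    proof (rule DERIV_nonpos_imp_nonincreasing[OF xy(3)])
      fix z assume z: "x \<le> z" "z \<le> y"
      have z1: "1/2 \<le> z" "z < 1" using z xy y1 by auto
      define S where "S = sin (pi*z)"
      define a where "a = real k - z"
      define b where "b = real k + z - 1"
      define A where "A = a powr (-p)"
      define B where "B = b powr (-p)"
      have Sp: "0 < S" unfolding S_def using z1 by (intro sin_gt_zero) auto
      have ap: "0 < a" and bp: "0 < b" using z1 kk by (auto simp: a_def b_def)
      have dS: "DERIV (\<lambda>z. sin (pi*z)) z :> cos (pi*z) * pi"
        by (rule derivative_eq_intros refl | simp)+
      have d1: "DERIV (\<lambda>z. sin (pi*z) powr p) z :> p * S powr (p - 1) * (cos (pi*z) * pi)"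
        using DERIV_fun_powr[OF dS, of p] Sp by (simp add: S_def)
      have da: "DERIV (\<lambda>z. (real k - z) powr (-p)) z :> (-p) * a powr (-p - 1) * (-1)"
        using DERIV_fun_powr[of "\<lambda>z. real k - z" "-1" z "-p"] ap
        by (simp add: a_def) (rule derivative_eq_intros refl | simp)+
      have db: "DERIV (\<lambda>z. (real k + z - 1) powr (-p)) z :> (-p) * b powr (-p - 1) * 1"
        using DERIV_fun_powr[of "\<lambda>z. real k + z - 1" "1" z "-p"] bp
        by (simp add: b_def) (rule derivative_eq_intros refl | simp)+
      have dF: "DERIV f z :> p * S powr (p - 1) * (cos (pi*z) * pi) * (A + B)
                 + ((-p) * a powr (-p - 1) * (-1) + (-p) * b powr (-p - 1) * 1) * S powr p"
        unfolding f_def A_def B_def a_def b_def S_def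
        by (rule DERIV_mult DERIV_add d1[unfolded S_def] da[unfolded a_def] db[unfolded b_def])+
      have br: "S * (A/a - B/b) \<le> pi * (- cos (pi*z)) * (A + B)"
        unfolding S_def A_def B_def a_def b_def by (rule bracket) (use assms z1 in auto)
      have e1: "S powr (p - 1) = S powr p / S" using Sp by (simp add: powr_diff)
      have e2: "a powr (-p - 1) = A / a" using ap by (simp add: powr_diff A_def)
      have e3: "b powr (-p - 1) = B / b" using bp by (simp add: powr_diff B_def)
      have "p * S powr (p - 1) * (cos (pi*z) * pi) * (A + B)
                 + ((-p) * a powr (-p - 1) * (-1) + (-p) * b powr (-p - 1) * 1) * S powr p
            = (p * S powr p / S) * (S * (A/a - B/b) - pi * (- cos (pi*z)) * (A + B))"
        using Sp unfolding e1 e2 e3 by (simp add: field_simps)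
      also have "\<dots> \<le> 0"
        using br Sp assms(2) by (intro mult_nonneg_nonpos) auto
      finally show "\<exists>D. DERIV f z :> D \<and> D \<le> 0" using dF by blast
    qed
    then show ?thesis by (simp add: fe)
  qed
qed
end
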